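(* Let $M$ be a closed connected Riemannian manifold, identified with its image under the Kuratowski embedding $M \to L^\infty(M)$, $p \mapsto d(p,\cdot)$. Then for every $p \in M$, \[ \operatorname{reach}(p, M \subset L^\infty(M)) = 0. \]
   Context: $L^\infty(M)$ denotes the space of bounded real functions on $M$ with the sup-norm; $d$ is the Riemannian distance of $M$, and the Kuratowski embedding is isometric. For a metric space $(X,\operatorname{dist})$ and $A \subset X$, let $\operatorname{Unp}(A)$ be the set of $x \in X$ for which there exists a unique $a \in A$ with $\operatorname{dist}(x,A) = \operatorname{dist}(x,a)$. For $a \in A$, the reach of $A$ at $a$ is $\operatorname{reach}(a,A) = \sup\{r \geq 0 : B_r(a) \subset \operatorname{Unp}(A)\}$, where $B_r(a)$ is the open ball of radius $r$ about $a$ in $X$. *)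

theory Defs
  imports "HOL-Analysis.Analysis"
begin

fun Ck_on :: "nat \<Rightarrow> 'b::euclidean_space set \<Rightarrow> ('b \<Rightarrow> 'c::real_normed_vector) \<Rightarrow> bool" where
  "Ck_on 0 S f = continuous_on S f"
| "Ck_on (Suc k) S f =
     (\<exists>f'. (\<forall>x\<in>S. (f has_derivative f' x) (at x)) \<and> (\<forall>v. Ck_on k S (\<lambda>x. f' x v)))"

definition smooth_on :: "'b::euclidean_space set \<Rightarrow> ('b \<Rightarrow> 'c::real_normed_vector) \<Rightarrow> bool" where
  "smooth_on S f \<longleftrightarrow> (\<forall>k. Ck_on k S f)"

text \<open>A chart with its metric: (U, phi, psi, g) where phi : U -> phi(U) open in the model
  space 'b, psi its inverse, and g y v w the Riemannian metric at the point psi y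
  in these coordinates.\<close>
type_synonym ('a, 'b) rchart = "'a set \<times> ('a \<Rightarrow> 'b) \<times> ('b \<Rightarrow> 'a) \<times> ('b \<Rightarrow> 'b \<Rightarrow> 'b \<Rightarrow> real)"

definition ch_dom :: "('a, 'b) rchart \<Rightarrow> 'a set" where "ch_dom c = fst c"
definition ch_map :: "('a, 'b) rchart \<Rightarrow> 'a \<Rightarrow> 'b" where "ch_map c = fst (snd c)"
definition ch_inv :: "('a, 'b) rchart \<Rightarrow> 'b \<Rightarrow> 'a" where "ch_inv c = fst (snd (snd c))"
definition ch_metric :: "('a, 'b) rchart \<Rightarrow> 'b \<Rightarrow> 'b \<Rightarrow> 'b \<Rightarrow> real" where
  "ch_metric c = snd (snd (snd c))"

definition riemannian_atlas :: "('a::t2_space, 'b::euclidean_space) rchart set \<Rightarrow> bool" where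
  "riemannian_atlas A \<longleftrightarrow>
     (\<Union>c\<in>A. ch_dom c) = UNIV \<and>
     (\<forall>c\<in>A. open (ch_dom c) \<and> open (ch_map c ` ch_dom c) \<and>
        homeomorphism (ch_dom c) (ch_map c ` ch_dom c) (ch_map c) (ch_inv c)) \<and>
     (\<forall>c\<in>A. \<forall>c'\<in>A.
        smooth_on (ch_map c ` (ch_dom c \<inter> ch_dom c')) (ch_map c' \<circ> ch_inv c)) \<and>
     (\<forall>c\<in>A. (\<forall>v w. smooth_on (ch_map c ` ch_dom c) (\<lambda>y. ch_metric c y v w)) \<and>
        (\<forall>y\<in>ch_map c ` ch_dom c. bilinear (ch_metric c y) \<and>
            (\<forall>v w. ch_metric c y v w = ch_metric c y w v) \<and>
            (\<forall>v. v \<noteq> 0 \<longrightarrow> ch_metric c y v v > 0))) \<and>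
     (\<forall>c\<in>A. \<forall>c'\<in>A. \<forall>y\<in>ch_map c ` (ch_dom c \<inter> ch_dom c'). \<forall>D v w.
        ((ch_map c' \<circ> ch_inv c) has_derivative D) (at y) \<longrightarrow>
        ch_metric c y v w = ch_metric c' (ch_map c' (ch_inv c y)) (D v) (D w))"

definition closed_connected_riemannian_manifold ::
    "('a::t2_space, 'b::euclidean_space) rchart set \<Rightarrow> bool" where
  "closed_connected_riemannian_manifold A \<longleftrightarrow>
     compact (UNIV :: 'a set) \<and> connected (UNIV :: 'a set) \<and> riemannian_atlas A"

definition piece_deriv ::
    "('a, 'b::euclidean_space) rchart \<Rightarrow> (real \<Rightarrow> 'a) \<Rightarrow> real \<Rightarrow> real \<Rightarrow> real \<Rightarrow> 'b" where
  "piece_deriv c \<gamma> a b s = vector_derivative (ch_map c \<circ> \<gamma>) (at s within {a..b})"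

definition admissible_decomp ::
    "('a::t2_space, 'b::euclidean_space) rchart set \<Rightarrow> (real \<Rightarrow> 'a) \<Rightarrow> nat \<Rightarrow> (nat \<Rightarrow> real)
       \<Rightarrow> (nat \<Rightarrow> ('a, 'b) rchart) \<Rightarrow> bool" where
  "admissible_decomp A \<gamma> n t c \<longleftrightarrow>
     continuous_on {0..1} \<gamma> \<and> t 0 = 0 \<and> t n = 1 \<and>
     (\<forall>i<n. t i < t (Suc i) \<and> c i \<in> A \<and> \<gamma> ` {t i..t (Suc i)} \<subseteq> ch_dom (c i) \<and>
        (\<exists>D. continuous_on {t i..t (Suc i)} D \<and>
           (\<forall>s\<in>{t i..t (Suc i)}.
              ((ch_map (c i) \<circ> \<gamma>) has_vector_derivative D s) (at s within {t i..t (Suc i)}))))"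

definition decomp_length ::
    "(real \<Rightarrow> 'a) \<Rightarrow> nat \<Rightarrow> (nat \<Rightarrow> real) \<Rightarrow> (nat \<Rightarrow> ('a, 'b::euclidean_space) rchart) \<Rightarrow> real" where
  "decomp_length \<gamma> n t c =
     (\<Sum>i<n. integral {t i..t (Suc i)}
        (\<lambda>s. sqrt (ch_metric (c i) (ch_map (c i) (\<gamma> s))
                 (piece_deriv (c i) \<gamma> (t i) (t (Suc i)) s)
                 (piece_deriv (c i) \<gamma> (t i) (t (Suc i)) s))))"

definition riem_dist :: "('a::t2_space, 'b::euclidean_space) rchart set \<Rightarrow> 'a \<Rightarrow> 'a \<Rightarrow> real" where
  "riem_dist A p q = Inf {decomp_length \<gamma> n t c | \<gamma> n t c.
       admissible_decomp A \<gamma> n t c \<and> \<gamma> 0 = p \<and> \<gamma> 1 = q}"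

definition Linf :: "('a \<Rightarrow> real) set" where
  "Linf = {f. bounded (range f)}"

definition sup_dist :: "('a \<Rightarrow> real) \<Rightarrow> ('a \<Rightarrow> real) \<Rightarrow> real" where
  "sup_dist f g = (SUP x. \<bar>f x - g x\<bar>)"

definition kuratowski :: "('a::t2_space, 'b::euclidean_space) rchart set \<Rightarrow> 'a \<Rightarrow> ('a \<Rightarrow> real)" where
  "kuratowski A p = (\<lambda>x. riem_dist A p x)"

definition set_dist :: "('x \<Rightarrow> 'x \<Rightarrow> real) \<Rightarrow> 'x \<Rightarrow> 'x set \<Rightarrow> real" where
  "set_dist dst x S = (INF a\<in>S. dst x a)"

definition Unp :: "'x set \<Rightarrow> ('x \<Rightarrow> 'x \<Rightarrow> real) \<Rightarrow> 'x set \<Rightarrow> 'x set" where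
  "Unp X dst S = {x \<in> X. \<exists>!a. a \<in> S \<and> set_dist dst x S = dst x a}"

definition open_ball :: "'x set \<Rightarrow> ('x \<Rightarrow> 'x \<Rightarrow> real) \<Rightarrow> 'x \<Rightarrow> real \<Rightarrow> 'x set" where
  "open_ball X dst a r = {x \<in> X. dst a x < r}"

definition reach :: "'x set \<Rightarrow> ('x \<Rightarrow> 'x \<Rightarrow> real) \<Rightarrow> 'x \<Rightarrow> 'x set \<Rightarrow> ereal" where
  "reach X dst a S = Sup {ereal r | r. r \<ge> 0 \<and> open_ball X dst a r \<subseteq> Unp X dst S}"

end

theory Submission
  imports Defs "HOL-Analysis.Analysis"
begin

lemma atlas_facts:
  assumes "riemannian_atlas A" "c \<in> A"
  shows "open (ch_dom c)" "open (ch_map c ` ch_dom c)"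
    "homeomorphism (ch_dom c) (ch_map c ` ch_dom c) (ch_map c) (ch_inv c)"
    "\<And>v w. continuous_on (ch_map c ` ch_dom c) (\<lambda>y. ch_metric c y v w)"
    "\<And>y. y \<in> ch_map c ` ch_dom c \<Longrightarrow> bilinear (ch_metric c y)"
    "\<And>y v. y \<in> ch_map c ` ch_dom c \<Longrightarrow> v \<noteq> 0 \<Longrightarrow> ch_metric c y v v > 0"
proof -
  show "open (ch_dom c)" "open (ch_map c ` ch_dom c)"
    "homeomorphism (ch_dom c) (ch_map c ` ch_dom c) (ch_map c) (ch_inv c)"
    using assms unfolding riemannian_atlas_def by auto
  show "\<And>y. y \<in> ch_map c ` ch_dom c \<Longrightarrow> bilinear (ch_metric c y)"
    "\<And>y v. y \<in> ch_map c ` ch_dom c \<Longrightarrow> v \<noteq> 0 \<Longrightarrow> ch_metric c y v v > 0"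
    using assms unfolding riemannian_atlas_def by blast+
  fix v w
  have "smooth_on (ch_map c ` ch_dom c) (\<lambda>y. ch_metric c y v w)"
    using assms unfolding riemannian_atlas_def by blast
  then have "Ck_on 0 (ch_map c ` ch_dom c) (\<lambda>y. ch_metric c y v w)"
    unfolding smooth_on_def by blast
  then show "continuous_on (ch_map c ` ch_dom c) (\<lambda>y. ch_metric c y v w)" by simp
qed

lemma atlas_trans:
  assumes "riemannian_atlas A" "c \<in> A" "c' \<in> A"
  obtains T' where
    "\<And>y. y \<in> ch_map c ` (ch_dom c \<inter> ch_dom c') \<Longrightarrow>
        ((ch_map c' \<circ> ch_inv c) has_derivative T' y) (at y)"
    "\<And>y v w. y \<in> ch_map c ` (ch_dom c \<inter> ch_dom c') \<Longrightarrow>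
        ch_metric c y v w = ch_metric c' (ch_map c' (ch_inv c y)) (T' y v) (T' y w)"
proof -
  have "smooth_on (ch_map c ` (ch_dom c \<inter> ch_dom c')) (ch_map c' \<circ> ch_inv c)"
    using assms unfolding riemannian_atlas_def by blast
  then have "Ck_on (Suc 0) (ch_map c ` (ch_dom c \<inter> ch_dom c')) (ch_map c' \<circ> ch_inv c)"
    unfolding smooth_on_def by blast
  then obtain T' where T': "\<And>y. y \<in> ch_map c ` (ch_dom c \<inter> ch_dom c') \<Longrightarrow>
        ((ch_map c' \<circ> ch_inv c) has_derivative T' y) (at y)" by auto
  moreover have "\<And>y v w. y \<in> ch_map c ` (ch_dom c \<inter> ch_dom c') \<Longrightarrow>
        ch_metric c y v w = ch_metric c' (ch_map c' (ch_inv c y)) (T' y v) (T' y w)"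
    using assms T' unfolding riemannian_atlas_def by blast
  ultimately show ?thesis using that by blast
qed

lemma bilinear_expand:
  fixes h :: "'b::euclidean_space \<Rightarrow> 'b \<Rightarrow> real"
  assumes "bilinear h"
  shows "h v w = (\<Sum>(i,j)\<in>Basis \<times> Basis. (v \<bullet> i) * (w \<bullet> j) * h i j)"
proof -
  have "h v w = h (\<Sum>i\<in>Basis. (v \<bullet> i) *\<^sub>R i) (\<Sum>j\<in>Basis. (w \<bullet> j) *\<^sub>R j)"
    by (simp only: euclidean_representation)
  also have "\<dots> = (\<Sum>(i,j)\<in>Basis \<times> Basis. h ((v \<bullet> i) *\<^sub>R i) ((w \<bullet> j) *\<^sub>R j))"
    by (rule bilinear_sum[OF assms])
  also have "\<dots> = (\<Sum>(i,j)\<in>Basis \<times> Basis. (v \<bullet> i) * (w \<bullet> j) * h i j)"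
    by (rule sum.cong) (auto simp: bilinear_lmul[OF assms] bilinear_rmul[OF assms])
  finally show ?thesis .
qed
lemma bilinear_scale:
  assumes "bilinear h"
  shows "h (a *\<^sub>R v) (a *\<^sub>R v) = a^2 * (h v v :: real)"
  by (simp add: bilinear_lmul[OF assms] bilinear_rmul[OF assms] power2_eq_square)

lemma bilinear_zero: "bilinear h \<Longrightarrow> h 0 0 = (0::real)"
  by (simp add: bilinear_lzero)
lemma metric_cont:
  assumes "riemannian_atlas A" "c \<in> A"
    and "continuous_on S y" "y ` S \<subseteq> ch_map c ` ch_dom c" "continuous_on S v"
  shows "continuous_on S (\<lambda>s. ch_metric c (y s) (v s) (v s))"
proof -
  have eq: "ch_metric c (y s) (v s) (v s) =
     (\<Sum>(i,j)\<in>Basis \<times> Basis. (v s \<bullet> i) * (v s \<bullet> j) * ch_metric c (y s) i j)" if "s \<in> S" for s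
  proof -
    have "y s \<in> ch_map c ` ch_dom c" using assms(4) that by blast
    then have "bilinear (ch_metric c (y s))" by (rule atlas_facts(5)[OF assms(1,2)])
    then show ?thesis by (rule bilinear_expand)
  qed
  have "continuous_on S (\<lambda>s. (\<Sum>(i,j)\<in>Basis \<times> Basis. (v s \<bullet> i) * (v s \<bullet> j) * ch_metric c (y s) i j))"
  proof (rule continuous_on_sum, clarify)
    fix i j :: 'b
    have h1: "continuous_on S (\<lambda>s. ch_metric c (y s) i j)"
      using continuous_on_compose2[OF atlas_facts(4)[OF assms(1,2), of i j] assms(3,4)] .
    have h2: "continuous_on S (\<lambda>s. (v s \<bullet> i) * (v s \<bullet> j))"
      by (intro continuous_on_mult continuous_on_inner assms(5) continuous_on_const)
    show "continuous_on S (\<lambda>s. (v s \<bullet> i) * (v s \<bullet> j) * ch_metric c (y s) i j)"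
      by (rule continuous_on_mult[OF h2 h1])
  qed
  then show ?thesis by (rule continuous_on_eq) (rule eq[symmetric])
qed

lemma metric_bounds:
  assumes "riemannian_atlas A" "c \<in> A" "compact K" "K \<subseteq> ch_map c ` ch_dom c"
  shows "\<exists>l>0. \<exists>L>0. \<forall>y\<in>K. \<forall>v. l * (norm v)^2 \<le> ch_metric c y v v \<and> ch_metric c y v v \<le> L * (norm v)^2"
proof (cases "K = {}")
  case True
  then show ?thesis by (intro exI[of _ 1] conjI exI[of _ "1::real"]) auto
next
  case False
  define S where "S = K \<times> sphere (0::'b) 1"
  obtain b :: 'b where b: "b \<in> Basis" using nonempty_Basis by blast
  have "b \<in> sphere 0 1" using b by simp
  then have Sne: "S \<noteq> {}" using False unfolding S_def by blast
  have Sc: "compact S" unfolding S_def using assms(3) by (intro compact_Times compact_sphere)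
  have cont: "continuous_on S (\<lambda>z. ch_metric c (fst z) (snd z) (snd z))"
  proof (rule metric_cont[OF assms(1,2)])
    show "continuous_on S fst" "continuous_on S snd" by (intro continuous_intros)+
    show "fst ` S \<subseteq> ch_map c ` ch_dom c" using assms(4) unfolding S_def by auto
  qed
  obtain z1 where z1: "z1 \<in> S" "\<And>z. z \<in> S \<Longrightarrow> ch_metric c (fst z1) (snd z1) (snd z1) \<le> ch_metric c (fst z) (snd z) (snd z)"
    using continuous_attains_inf[OF Sc Sne cont] by blast
  obtain z2 where z2: "z2 \<in> S" "\<And>z. z \<in> S \<Longrightarrow> ch_metric c (fst z) (snd z) (snd z) \<le> ch_metric c (fst z2) (snd z2) (snd z2)"
    using continuous_attains_sup[OF Sc Sne cont] by blast
  define l where "l = ch_metric c (fst z1) (snd z1) (snd z1)"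
  define L where "L = ch_metric c (fst z2) (snd z2) (snd z2)"
  have lpos: "l > 0" unfolding l_def
    using z1(1) assms(4) unfolding S_def
    by (intro atlas_facts(6)[OF assms(1,2)]) auto
  have lL: "l \<le> L" unfolding l_def L_def using z1 z2 by blast
  have main: "l * (norm v)^2 \<le> ch_metric c y v v \<and> ch_metric c y v v \<le> L * (norm v)^2"
    if y: "y \<in> K" for y v
  proof (cases "v = 0")
    case True
    have "bilinear (ch_metric c y)" using y assms(4) by (intro atlas_facts(5)[OF assms(1,2)]) auto
    then show ?thesis using True by (simp add: bilinear_zero)
  next
    case False
    define u where "u = v /\<^sub>R norm v"
    have uS: "(y, u) \<in> S" unfolding S_def u_def using y False by simp
    have vu: "v = norm v *\<^sub>R u" unfolding u_def using False by simp
    have "bilinear (ch_metric c y)" using y assms(4) by (intro atlas_facts(5)[OF assms(1,2)]) auto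
    then have eq: "ch_metric c y v v = (norm v)^2 * ch_metric c y u u"
      using bilinear_scale[of "ch_metric c y" "norm v" u] vu by simp
    have "l \<le> ch_metric c y u u" "ch_metric c y u u \<le> L"
      using z1(2)[OF uS] z2(2)[OF uS] unfolding l_def L_def by auto
    then show ?thesis unfolding eq
      by (simp add: mult.commute mult_right_mono)
  qed
  show ?thesis using lpos lL main by (intro exI[of _ l] conjI exI[of _ L]) auto
qed


definition seg_int :: "('a, 'b::euclidean_space) rchart \<Rightarrow> (real \<Rightarrow> 'a) \<Rightarrow> real \<Rightarrow> real \<Rightarrow> real \<Rightarrow> real" where
  "seg_int c \<gamma> a b s = sqrt (ch_metric c (ch_map c (\<gamma> s)) (piece_deriv c \<gamma> a b s) (piece_deriv c \<gamma> a b s))"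

lemma decomp_length_eq:
  "decomp_length \<gamma> n t c = (\<Sum>i<n. integral {t i..t (Suc i)} (seg_int (c i) \<gamma> (t i) (t (Suc i))))"
  unfolding decomp_length_def seg_int_def by simp

definition piece_ok where
  "piece_ok A \<gamma> a b cc D \<longleftrightarrow> a < b \<and> cc \<in> A \<and> \<gamma> ` {a..b} \<subseteq> ch_dom cc \<and> continuous_on {a..b} \<gamma> \<and>
     continuous_on {a..b} D \<and>
     (\<forall>s\<in>{a..b}. ((ch_map cc \<circ> \<gamma>) has_vector_derivative D s) (at s within {a..b}))"

lemma adm_mono:
  assumes "admissible_decomp A \<gamma> n t c" "i \<le> j" "j \<le> n"
  shows "t i \<le> t j"
  using assms(2,3)
proof (induction j)
  case 0 then show ?case by simp
next
  case (Suc j)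
  show ?case
  proof (cases "i = Suc j")
    case True then show ?thesis by simp
  next
    case False
    then have "t i \<le> t j" using Suc by simp
    moreover have "t j < t (Suc j)" using assms(1) Suc(3) unfolding admissible_decomp_def by simp
    ultimately show ?thesis by simp
  qed
qed

lemma adm_range:
  assumes "admissible_decomp A \<gamma> n t c" "i \<le> n"
  shows "0 \<le> t i" "t i \<le> 1"
proof -
  have "t 0 = 0" "t n = 1" using assms(1) unfolding admissible_decomp_def by auto
  then show "0 \<le> t i" "t i \<le> 1" using adm_mono[OF assms(1), of 0 i] adm_mono[OF assms(1), of i n] assms(2) by auto
qed

lemma adm_npos:
  assumes "admissible_decomp A \<gamma> n t c" shows "0 < n"
  using assms unfolding admissible_decomp_def by (cases n) auto

lemma adm_piece:
  assumes "admissible_decomp A \<gamma> n t c" "i < n"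
  shows "\<exists>D. piece_ok A \<gamma> (t i) (t (Suc i)) (c i) D"
proof -
  have sub: "{t i..t (Suc i)} \<subseteq> {0..1}"
    using adm_range[OF assms(1), of i] adm_range[OF assms(1), of "Suc i"] assms(2) by auto
  have "continuous_on {0..1} \<gamma>" using assms(1) unfolding admissible_decomp_def by simp
  then have "continuous_on {t i..t (Suc i)} \<gamma>" using sub continuous_on_subset by blast
  then show ?thesis using assms unfolding admissible_decomp_def piece_ok_def by auto
qed

lemma adm_intro:
  assumes "continuous_on {0..1} \<gamma>" "t 0 = 0" "t n = 1"
    and "\<And>i. i < n \<Longrightarrow> \<exists>D. piece_ok A \<gamma> (t i) (t (Suc i)) (c i) D"
  shows "admissible_decomp A \<gamma> n t c"
  using assms unfolding admissible_decomp_def piece_ok_def by metis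

lemma piece_deriv_eq:
  assumes "piece_ok A \<gamma> a b cc D" "s \<in> {a..b}"
  shows "piece_deriv cc \<gamma> a b s = D s"
  using assms unfolding piece_ok_def piece_deriv_def
  by (metis box_real(2) vector_derivative_within_cbox)

lemma piece_seg_int:
  assumes "piece_ok A \<gamma> a b cc D" "s \<in> {a..b}"
  shows "seg_int cc \<gamma> a b s = sqrt (ch_metric cc (ch_map cc (\<gamma> s)) (D s) (D s))"
  using piece_deriv_eq[OF assms] unfolding seg_int_def by simp

lemma piece_in_chart:
  assumes "piece_ok A \<gamma> a b cc D" "s \<in> {a..b}"
  shows "ch_map cc (\<gamma> s) \<in> ch_map cc ` ch_dom cc"
  using assms unfolding piece_ok_def by blast

lemma metric_nonneg:
  assumes "riemannian_atlas A" "cc \<in> A" "y \<in> ch_map cc ` ch_dom cc"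
  shows "0 \<le> ch_metric cc y v v"
proof (cases "v = 0")
  case True
  then show ?thesis using atlas_facts(5)[OF assms] bilinear_zero by (metis order_refl)
next
  case False
  then show ?thesis using atlas_facts(6)[OF assms] by (simp add: less_imp_le)
qed

lemma piece_cont:
  assumes "riemannian_atlas A" "piece_ok A \<gamma> a b cc D"
  shows "continuous_on {a..b} (\<lambda>s. sqrt (ch_metric cc (ch_map cc (\<gamma> s)) (D s) (D s)))"
proof -
  have cc: "cc \<in> A" using assms(2) unfolding piece_ok_def by simp
  have hom: "homeomorphism (ch_dom cc) (ch_map cc ` ch_dom cc) (ch_map cc) (ch_inv cc)"
    by (rule atlas_facts(3)[OF assms(1) cc])
  have c1: "continuous_on {a..b} (\<lambda>s. ch_map cc (\<gamma> s))"
    using continuous_on_compose2[OF homeomorphism_cont1[OF hom], of "{a..b}" \<gamma>] assms(2)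
    unfolding piece_ok_def by blast
  have "continuous_on {a..b} (\<lambda>s. ch_metric cc (ch_map cc (\<gamma> s)) (D s) (D s))"
    apply (rule metric_cont[OF assms(1) cc c1])
    using assms(2) unfolding piece_ok_def by auto
  then show ?thesis by (rule continuous_on_real_sqrt)
qed

lemma piece_integrable:
  assumes "riemannian_atlas A" "piece_ok A \<gamma> a b cc D"
  shows "seg_int cc \<gamma> a b integrable_on {a..b}"
proof -
  have "(\<lambda>s. sqrt (ch_metric cc (ch_map cc (\<gamma> s)) (D s) (D s))) integrable_on {a..b}"
    by (rule integrable_continuous_interval[OF piece_cont[OF assms]])
  then show ?thesis
    by (rule integrable_eq) (rule piece_seg_int[OF assms(2), symmetric])
qed

lemma piece_nonneg:
  assumes "riemannian_atlas A" "piece_ok A \<gamma> a b cc D" "s \<in> {a..b}"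
  shows "0 \<le> seg_int cc \<gamma> a b s"
proof -
  have cc: "cc \<in> A" using assms(2) unfolding piece_ok_def by simp
  show ?thesis
    unfolding piece_seg_int[OF assms(2,3)]
    using metric_nonneg[OF assms(1) cc piece_in_chart[OF assms(2,3)]] by simp
qed

lemma piece_int_nonneg:
  assumes "riemannian_atlas A" "piece_ok A \<gamma> a b cc D"
  shows "0 \<le> integral {a..b} (seg_int cc \<gamma> a b)"
  using piece_integrable[OF assms] piece_nonneg[OF assms] by (rule integral_nonneg)

lemma length_nonneg:
  assumes "riemannian_atlas A" "admissible_decomp A \<gamma> n t c"
  shows "0 \<le> decomp_length \<gamma> n t c"
  unfolding decomp_length_eq
proof (rule sum_nonneg)
  fix i assume "i \<in> {..<n}"
  then obtain D where "piece_ok A \<gamma> (t i) (t (Suc i)) (c i) D" using adm_piece[OF assms(2)] by blast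
  then show "0 \<le> integral {t i..t (Suc i)} (seg_int (c i) \<gamma> (t i) (t (Suc i)))"
    by (rule piece_int_nonneg[OF assms(1)])
qed


definition conn :: "('a::t2_space, 'b::euclidean_space) rchart set \<Rightarrow> 'a \<Rightarrow> 'a \<Rightarrow> bool" where
  "conn A x y \<longleftrightarrow> (\<exists>\<gamma> n t c. admissible_decomp A \<gamma> n t c \<and> \<gamma> 0 = x \<and> \<gamma> 1 = y)"

lemma d_le:
  assumes "riemannian_atlas A" "admissible_decomp A \<gamma> n t c" "\<gamma> 0 = x" "\<gamma> 1 = y"
  shows "riem_dist A x y \<le> decomp_length \<gamma> n t c"
  unfolding riem_dist_def
proof (rule cInf_lower)
  show "decomp_length \<gamma> n t c \<in> {decomp_length \<gamma> n t c |\<gamma> n t c. admissible_decomp A \<gamma> n t c \<and> \<gamma> 0 = x \<and> \<gamma> 1 = y}"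
    using assms by blast
  show "bdd_below {decomp_length \<gamma> n t c |\<gamma> n t c. admissible_decomp A \<gamma> n t c \<and> \<gamma> 0 = x \<and> \<gamma> 1 = y}"
    by (rule bdd_belowI[of _ 0]) (auto intro: length_nonneg[OF assms(1)])
qed

lemma d_ge:
  assumes "conn A x y"
    and "\<And>\<gamma> n t c. admissible_decomp A \<gamma> n t c \<Longrightarrow> \<gamma> 0 = x \<Longrightarrow> \<gamma> 1 = y \<Longrightarrow> m \<le> decomp_length \<gamma> n t c"
  shows "m \<le> riem_dist A x y"
  unfolding riem_dist_def
proof (rule cInf_greatest)
  show "{decomp_length \<gamma> n t c |\<gamma> n t c. admissible_decomp A \<gamma> n t c \<and> \<gamma> 0 = x \<and> \<gamma> 1 = y} \<noteq> {}"
    using assms(1) unfolding conn_def by blast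
  fix z assume "z \<in> {decomp_length \<gamma> n t c |\<gamma> n t c. admissible_decomp A \<gamma> n t c \<and> \<gamma> 0 = x \<and> \<gamma> 1 = y}"
  then show "m \<le> z" using assms(2) by blast
qed

lemma d_nonneg:
  assumes "riemannian_atlas A" "conn A x y"
  shows "0 \<le> riem_dist A x y"
  by (rule d_ge[OF assms(2)]) (rule length_nonneg[OF assms(1)])

lemma line_deriv:
  "((\<lambda>s::real. y1 + s *\<^sub>R v) has_vector_derivative v) (at s within S)"
proof -
  have "((\<lambda>s::real. s *\<^sub>R v) has_vector_derivative s *\<^sub>R 0 + 1 *\<^sub>R v) (at s within S)"
    by (intro has_vector_derivative_scaleR DERIV_ident has_vector_derivative_const)
  then have "((\<lambda>s::real. s *\<^sub>R v) has_vector_derivative 1 *\<^sub>R v) (at s within S)" by simp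
  then have "((\<lambda>s::real. y1 + s *\<^sub>R v) has_vector_derivative 0 + 1 *\<^sub>R v) (at s within S)"
    by (intro has_vector_derivative_add has_vector_derivative_const)
  then show ?thesis by simp
qed

lemma segment_curve:
  assumes atl: "riemannian_atlas A" and c: "c \<in> A"
    and seg: "closed_segment y1 y2 \<subseteq> ch_map c ` ch_dom c" and L: "0 \<le> L"
    and bnd: "\<And>y. y \<in> closed_segment y1 y2 \<Longrightarrow> ch_metric c y (y2 - y1) (y2 - y1) \<le> L * (norm (y2 - y1))^2"
  shows "\<exists>\<gamma> n t cc. admissible_decomp A \<gamma> n t cc \<and> \<gamma> 0 = ch_inv c y1 \<and> \<gamma> 1 = ch_inv c y2 \<and>
           decomp_length \<gamma> n t cc \<le> sqrt L * norm (y2 - y1)"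
proof -
  define v where "v = y2 - y1"
  define l where "l s = y1 + s *\<^sub>R v" for s :: real
  define \<gamma> where "\<gamma> s = ch_inv c (l s)" for s
  have hom: "homeomorphism (ch_dom c) (ch_map c ` ch_dom c) (ch_map c) (ch_inv c)"
    by (rule atlas_facts(3)[OF atl c])
  have lseg: "l s \<in> closed_segment y1 y2" if "s \<in> {0..1}" for s
    using that unfolding l_def v_def closed_segment_def
    by (auto intro!: exI[of _ s] simp: algebra_simps)
  then have lU: "l s \<in> ch_map c ` ch_dom c" if "s \<in> {0..1}" for s using seg that by blast
  have lcont: "continuous_on {0..1} l" unfolding l_def by (intro continuous_intros)
  have gcont: "continuous_on {0..1} \<gamma>"
    unfolding \<gamma>_def using continuous_on_compose2[OF homeomorphism_cont2[OF hom] lcont] lU by blast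
  have gU: "\<gamma> ` {0..1} \<subseteq> ch_dom c"
    unfolding \<gamma>_def using lU homeomorphism_image2[OF hom] by blast
  have phig: "(ch_map c \<circ> \<gamma>) s = l s" if "s \<in> {0..1}" for s
    unfolding \<gamma>_def o_def using homeomorphism_apply2[OF hom lU[OF that]] .
  have pok: "piece_ok A \<gamma> 0 1 c (\<lambda>_. v)"
    unfolding piece_ok_def
  proof (intro conjI ballI)
    fix s :: real assume s: "s \<in> {0..1}"
    show "((ch_map c \<circ> \<gamma>) has_vector_derivative v) (at s within {0..1})"
      by (rule has_vector_derivative_transform[OF s phig line_deriv[of y1 v s "{0..1}", folded l_def]])
  qed (use c gU gcont in auto)
  have adm: "admissible_decomp A \<gamma> 1 real (\<lambda>_. c)"
    by (rule adm_intro) (use gcont pok in auto)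
  have g0: "\<gamma> 0 = ch_inv c y1" and g1: "\<gamma> 1 = ch_inv c y2"
    unfolding \<gamma>_def l_def v_def by auto
  have len: "decomp_length \<gamma> 1 real (\<lambda>_. c) = integral {0..1} (seg_int c \<gamma> 0 1)"
    unfolding decomp_length_eq by simp
  have "integral {0..1} (seg_int c \<gamma> 0 1) \<le> integral {0..1::real} (\<lambda>_. sqrt L * norm v)"
  proof (rule Henstock_Kurzweil_Integration.integral_le)
    show "seg_int c \<gamma> 0 1 integrable_on {0..1}" by (rule piece_integrable[OF atl pok])
    show "(\<lambda>_. sqrt L * norm v) integrable_on {0..1::real}" by (rule integrable_const_ivl)
    fix s :: real assume s: "s \<in> {0..1}"
    have "seg_int c \<gamma> 0 1 s = sqrt (ch_metric c (l s) v v)"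
      using piece_seg_int[OF pok s] phig[OF s] by simp
    also have "\<dots> \<le> sqrt (L * (norm v)^2)"
      using bnd[OF lseg[OF s]] unfolding v_def by simp
    also have "\<dots> = sqrt L * norm v" by (simp add: real_sqrt_mult)
    finally show "seg_int c \<gamma> 0 1 s \<le> sqrt L * norm v" .
  qed
  also have "\<dots> = sqrt L * norm v" by simp
  finally show ?thesis using adm g0 g1 len unfolding v_def by metis
qed


lemma piece_affine:
  assumes atl: "riemannian_atlas A" and pok: "piece_ok A \<gamma>' a b cc D" and m: "m > 0"
    and a': "a' = (a - k) / m" and b': "b' = (b - k) / m"
    and eq: "\<And>s. s \<in> {a'..b'} \<Longrightarrow> \<gamma> s = \<gamma>' (m * s + k)"
  shows "piece_ok A \<gamma> a' b' cc (\<lambda>s. m *\<^sub>R D (m * s + k))"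
    "integral {a'..b'} (seg_int cc \<gamma> a' b') = integral {a..b} (seg_int cc \<gamma>' a b)"
proof -
  define \<alpha> where "\<alpha> s = m * s + k" for s :: real
  have ab: "a < b" and cc: "cc \<in> A" and dom': "\<gamma>' ` {a..b} \<subseteq> ch_dom cc"
    and gc': "continuous_on {a..b} \<gamma>'" and Dc: "continuous_on {a..b} D"
    and der': "\<And>u. u \<in> {a..b} \<Longrightarrow> ((ch_map cc \<circ> \<gamma>') has_vector_derivative D u) (at u within {a..b})"
    using pok unfolding piece_ok_def by auto
  have ab': "a' < b'" using ab m unfolding a' b' by (simp add: divide_strict_right_mono)
  have \<alpha>in: "\<alpha> s \<in> {a..b}" if "s \<in> {a'..b'}" for s
  proof -
    have "a' \<le> s" "s \<le> b'" using that by auto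
    then have "a - k \<le> m * s" "m * s \<le> b - k" using m unfolding a' b' by (auto simp: field_simps)
    then show ?thesis unfolding \<alpha>_def by auto
  qed
  have \<alpha>img: "\<alpha> ` {a'..b'} \<subseteq> {a..b}" using \<alpha>in by blast
  have \<alpha>c: "continuous_on {a'..b'} \<alpha>" unfolding \<alpha>_def by (intro continuous_intros)
  have eq2: "\<gamma> s = \<gamma>' (\<alpha> s)" if "s \<in> {a'..b'}" for s using eq[OF that] unfolding \<alpha>_def .
  have gc: "continuous_on {a'..b'} \<gamma>"
  proof -
    have "continuous_on {a'..b'} (\<gamma>' \<circ> \<alpha>)"
      by (rule continuous_on_compose[OF \<alpha>c continuous_on_subset[OF gc' \<alpha>img]])
    then show ?thesis by (rule continuous_on_eq) (simp add: eq2)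
  qed
  have D'c: "continuous_on {a'..b'} (\<lambda>s. m *\<^sub>R D (m * s + k))"
  proof -
    have "continuous_on {a'..b'} (D \<circ> \<alpha>)"
      by (rule continuous_on_compose[OF \<alpha>c continuous_on_subset[OF Dc \<alpha>img]])
    then have "continuous_on {a'..b'} (\<lambda>s. m *\<^sub>R (D \<circ> \<alpha>) s)" by (rule continuous_on_scaleR[OF continuous_on_const])
    then show ?thesis unfolding \<alpha>_def o_def .
  qed
  have dom: "\<gamma> ` {a'..b'} \<subseteq> ch_dom cc" using eq2 \<alpha>in dom' by force
  have der: "((ch_map cc \<circ> \<gamma>) has_vector_derivative m *\<^sub>R D (m * s + k)) (at s within {a'..b'})"
    if s: "s \<in> {a'..b'}" for s
  proof -
    have d1: "(\<alpha> has_vector_derivative m) (at s within {a'..b'})"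
    proof -
      have "((\<lambda>s. m * s + k) has_real_derivative m * 1 + 0) (at s within {a'..b'})"
        by (rule DERIV_add[OF DERIV_cmult[OF DERIV_ident] DERIV_const])
      then show ?thesis unfolding \<alpha>_def has_real_derivative_iff_has_vector_derivative by simp
    qed
    have d2: "((ch_map cc \<circ> \<gamma>') has_vector_derivative D (\<alpha> s)) (at (\<alpha> s) within \<alpha> ` {a'..b'})"
      by (rule has_vector_derivative_within_subset[OF der'[OF \<alpha>in[OF s]] \<alpha>img])
    have "(((ch_map cc \<circ> \<gamma>') \<circ> \<alpha>) has_vector_derivative m *\<^sub>R D (\<alpha> s)) (at s within {a'..b'})"
      by (rule vector_diff_chain_within[OF d1 d2])
    then have d3: "(((ch_map cc \<circ> \<gamma>') \<circ> \<alpha>) has_vector_derivative m *\<^sub>R D (m * s + k)) (at s within {a'..b'})"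
      unfolding \<alpha>_def by simp
    have e3: "(ch_map cc \<circ> \<gamma>) x = ((ch_map cc \<circ> \<gamma>') \<circ> \<alpha>) x" if "x \<in> {a'..b'}" for x
      using eq2[OF that] by simp
    show ?thesis by (rule has_vector_derivative_transform[OF s e3 d3])
  qed
  show pok': "piece_ok A \<gamma> a' b' cc (\<lambda>s. m *\<^sub>R D (m * s + k))"
    unfolding piece_ok_def using ab' cc dom gc D'c der by auto
  define h where "h = seg_int cc \<gamma>' a b"
  have hint: "(h has_integral integral {a..b} h) (cbox a b)"
    using piece_integrable[OF atl pok] unfolding h_def box_real(2) by (rule integrable_integral)
  have "((\<lambda>x. h (m *\<^sub>R x + k)) has_integral (integral {a..b} h /\<^sub>R m ^ DIM(real)))
           (cbox ((a - k) /\<^sub>R m) ((b - k) /\<^sub>R m))"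
    by (rule has_integral_affinity'[OF hint m])
  then have "((\<lambda>x. h (m * x + k)) has_integral (integral {a..b} h / m)) {a'..b'}"
    unfolding a' b' by (simp add: divide_inverse mult.commute)
  then have "((\<lambda>x. m * h (m * x + k)) has_integral (m * (integral {a..b} h / m))) {a'..b'}"
    by (rule has_integral_mult_right)
  then have hi2: "((\<lambda>x. m * h (m * x + k)) has_integral integral {a..b} h) {a'..b'}"
    using m by simp
  have "(seg_int cc \<gamma> a' b' has_integral integral {a..b} h) {a'..b'}"
  proof (rule has_integral_eq[OF _ hi2])
    fix s assume s: "s \<in> {a'..b'}"
    have y: "ch_map cc (\<gamma>' (\<alpha> s)) \<in> ch_map cc ` ch_dom cc" using dom' \<alpha>in[OF s] by blast
    have bl: "bilinear (ch_metric cc (ch_map cc (\<gamma>' (\<alpha> s))))" by (rule atlas_facts(5)[OF atl cc y])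
    have nn: "0 \<le> ch_metric cc (ch_map cc (\<gamma>' (\<alpha> s))) (D (\<alpha> s)) (D (\<alpha> s))"
      by (rule metric_nonneg[OF atl cc y])
    have "seg_int cc \<gamma> a' b' s = sqrt (ch_metric cc (ch_map cc (\<gamma>' (\<alpha> s))) (m *\<^sub>R D (\<alpha> s)) (m *\<^sub>R D (\<alpha> s)))"
      using piece_seg_int[OF pok' s] eq2[OF s] unfolding \<alpha>_def by simp
    also have "\<dots> = sqrt (m^2 * ch_metric cc (ch_map cc (\<gamma>' (\<alpha> s))) (D (\<alpha> s)) (D (\<alpha> s)))"
      using bilinear_scale[OF bl] by simp
    also have "\<dots> = m * sqrt (ch_metric cc (ch_map cc (\<gamma>' (\<alpha> s))) (D (\<alpha> s)) (D (\<alpha> s)))"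
      using m by (simp add: real_sqrt_mult)
    also have "\<dots> = m * h (m * s + k)"
      unfolding h_def using piece_seg_int[OF pok \<alpha>in[OF s]] unfolding \<alpha>_def by simp
    finally show "m * h (m * s + k) = seg_int cc \<gamma> a' b' s" by simp
  qed
  then show "integral {a'..b'} (seg_int cc \<gamma> a' b') = integral {a..b} (seg_int cc \<gamma>' a b)"
    unfolding h_def by (rule integral_unique)
qed


lemma sum_split_add: "(\<Sum>i<n1 + (n2::nat). f i) = (\<Sum>i<n1. f i) + (\<Sum>j<n2. f (n1 + j))"
  by (induction n2) (simp_all add: add.assoc)

lemma concat_curve:
  assumes atl: "riemannian_atlas A"
    and adm1: "admissible_decomp A \<gamma>1 n1 t1 c1" and adm2: "admissible_decomp A \<gamma>2 n2 t2 c2"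
    and mid: "\<gamma>1 1 = \<gamma>2 0"
  shows "\<exists>\<gamma> n t c. admissible_decomp A \<gamma> n t c \<and> \<gamma> 0 = \<gamma>1 0 \<and> \<gamma> 1 = \<gamma>2 1 \<and>
     decomp_length \<gamma> n t c = decomp_length \<gamma>1 n1 t1 c1 + decomp_length \<gamma>2 n2 t2 c2"
proof -
  define \<gamma> where "\<gamma> s = (if s \<le> 1/2 then \<gamma>1 (2 * s) else \<gamma>2 (2 * s - 1))" for s :: real
  define t where "t i = (if i \<le> n1 then t1 i / 2 else (t2 (i - n1) + 1) / 2)" for i
  define c where "c i = (if i < n1 then c1 i else c2 (i - n1))" for i
  have t10: "t1 0 = 0" and t11: "t1 n1 = 1" and g1c: "continuous_on {0..1} \<gamma>1"
    using adm1 unfolding admissible_decomp_def by auto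
  have t20: "t2 0 = 0" and t21: "t2 n2 = 1" and g2c: "continuous_on {0..1} \<gamma>2"
    using adm2 unfolding admissible_decomp_def by auto
  have n1pos: "0 < n1" using adm_npos[OF adm1] .
  have n2pos: "0 < n2" using adm_npos[OF adm2] .
  have tA: "t i = t1 i / 2" if "i \<le> n1" for i using that unfolding t_def by simp
  have tB: "t (n1 + j) = (t2 j + 1) / 2" for j
    unfolding t_def using t11 t20 by auto
  have cA: "c i = c1 i" if "i < n1" for i using that unfolding c_def by simp
  have cB: "c (n1 + j) = c2 j" for j unfolding c_def by simp
  have gcont: "continuous_on {0..1} \<gamma>"
    unfolding \<gamma>_def
  proof (rule continuous_on_cases_le)
    have "continuous_on {x \<in> {0..1::real}. x \<le> 1/2} ((\<lambda>s. \<gamma>1 s) \<circ> (\<lambda>s. 2 * s))"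
      by (rule continuous_on_compose) (auto intro!: continuous_intros intro: continuous_on_subset[OF g1c])
    then show "continuous_on {x \<in> {0..1::real}. x \<le> 1/2} (\<lambda>s. \<gamma>1 (2 * s))" by (simp add: o_def)
    have "continuous_on {x \<in> {0..1::real}. 1/2 \<le> x} ((\<lambda>s. \<gamma>2 s) \<circ> (\<lambda>s. 2 * s - 1))"
      by (rule continuous_on_compose) (auto intro!: continuous_intros intro: continuous_on_subset[OF g2c])
    then show "continuous_on {x \<in> {0..1::real}. 1/2 \<le> x} (\<lambda>s. \<gamma>2 (2 * s - 1))" by (simp add: o_def)
    show "continuous_on {0..1::real} (\<lambda>x. x)" by (rule continuous_on_id)
    fix x :: real assume "x = 1 / 2"
    then have "2 * x = 1" "2 * x - 1 = 0" by simp_all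
    then show "\<gamma>1 (2 * x) = \<gamma>2 (2 * x - 1)" using mid by simp
  qed
  have pA: "piece_ok A \<gamma> (t i) (t (Suc i)) (c i) (\<lambda>s. 2 *\<^sub>R D (2 * s + 0))
        \<and> integral {t i..t (Suc i)} (seg_int (c i) \<gamma> (t i) (t (Suc i)))
          = integral {t1 i..t1 (Suc i)} (seg_int (c1 i) \<gamma>1 (t1 i) (t1 (Suc i)))"
    if i: "i < n1" and D: "piece_ok A \<gamma>1 (t1 i) (t1 (Suc i)) (c1 i) D" for i D
  proof -
    have ti: "t i = (t1 i - 0) / 2" "t (Suc i) = (t1 (Suc i) - 0) / 2" using tA i by auto
    have le1: "t1 (Suc i) \<le> 1" using adm_range[OF adm1, of "Suc i"] i by simp
    have eq: "\<gamma> s = \<gamma>1 (2 * s + 0)" if "s \<in> {t i..t (Suc i)}" for s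
      using that le1 ti unfolding \<gamma>_def by auto
    show ?thesis using piece_affine[OF atl D _ ti eq] cA[OF i] by simp
  qed
  have pB: "piece_ok A \<gamma> (t (n1 + j)) (t (Suc (n1 + j))) (c (n1 + j)) (\<lambda>s. 2 *\<^sub>R D (2 * s + -1))
        \<and> integral {t (n1 + j)..t (Suc (n1 + j))} (seg_int (c (n1 + j)) \<gamma> (t (n1 + j)) (t (Suc (n1 + j))))
          = integral {t2 j..t2 (Suc j)} (seg_int (c2 j) \<gamma>2 (t2 j) (t2 (Suc j)))"
    if j: "j < n2" and D: "piece_ok A \<gamma>2 (t2 j) (t2 (Suc j)) (c2 j) D" for j D
  proof -
    have ti: "t (n1 + j) = (t2 j - -1) / 2" "t (Suc (n1 + j)) = (t2 (Suc j) - -1) / 2"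
      using tB[of j] tB[of "Suc j"] by auto
    have ge0: "0 \<le> t2 j" using adm_range[OF adm2, of j] j by simp
    have eq: "\<gamma> s = \<gamma>2 (2 * s + -1)" if "s \<in> {t (n1 + j)..t (Suc (n1 + j))}" for s
    proof (cases "s \<le> 1/2")
      case True
      then have "s = 1/2" using that ti ge0 by auto
      then have "2 * s = 1" "2 * s + -1 = 0" "s \<le> 1/2" by simp_all
      then show ?thesis unfolding \<gamma>_def using mid by simp
    next
      case False
      then show ?thesis unfolding \<gamma>_def by simp
    qed
    show ?thesis using piece_affine[OF atl D _ ti eq] cB by simp
  qed
  have adm: "admissible_decomp A \<gamma> (n1 + n2) t c"
  proof (rule adm_intro[OF gcont])
    show "t 0 = 0" using tA[of 0] t10 by simp
    show "t (n1 + n2) = 1" using tB[of n2] t21 by simp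
    fix i assume i: "i < n1 + n2"
    show "\<exists>D. piece_ok A \<gamma> (t i) (t (Suc i)) (c i) D"
    proof (cases "i < n1")
      case True
      then obtain D where "piece_ok A \<gamma>1 (t1 i) (t1 (Suc i)) (c1 i) D" using adm_piece[OF adm1] by blast
      then show ?thesis using pA[OF True] by blast
    next
      case False
      then obtain j where j: "i = n1 + j" "j < n2" using i by (metis add_diff_inverse_nat nat_add_left_cancel_less)
      then obtain D where "piece_ok A \<gamma>2 (t2 j) (t2 (Suc j)) (c2 j) D" using adm_piece[OF adm2] by blast
      then show ?thesis using pB[OF j(2)] j(1) by blast
    qed
  qed
  have len: "decomp_length \<gamma> (n1 + n2) t c = decomp_length \<gamma>1 n1 t1 c1 + decomp_length \<gamma>2 n2 t2 c2"
    unfolding decomp_length_eq sum_split_add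
  proof (intro arg_cong2[where f="(+)"] sum.cong refl)
    fix i assume "i \<in> {..<n1}"
    then have i: "i < n1" by simp
    then obtain D where "piece_ok A \<gamma>1 (t1 i) (t1 (Suc i)) (c1 i) D" using adm_piece[OF adm1] by blast
    then show "integral {t i..t (Suc i)} (seg_int (c i) \<gamma> (t i) (t (Suc i))) =
        integral {t1 i..t1 (Suc i)} (seg_int (c1 i) \<gamma>1 (t1 i) (t1 (Suc i)))" using pA[OF i] by blast
  next
    fix j assume "j \<in> {..<n2}"
    then have j: "j < n2" by simp
    then obtain D where "piece_ok A \<gamma>2 (t2 j) (t2 (Suc j)) (c2 j) D" using adm_piece[OF adm2] by blast
    then show "integral {t (n1 + j)..t (Suc (n1 + j))} (seg_int (c (n1 + j)) \<gamma> (t (n1 + j)) (t (Suc (n1 + j)))) =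
        integral {t2 j..t2 (Suc j)} (seg_int (c2 j) \<gamma>2 (t2 j) (t2 (Suc j)))" using pB[OF j] by blast
  qed
  have "\<gamma> 0 = \<gamma>1 0" "\<gamma> 1 = \<gamma>2 1" unfolding \<gamma>_def by auto
  then show ?thesis using adm len by blast
qed


lemma conn_trans:
  assumes atl: "riemannian_atlas A" and "conn A x y" "conn A y z"
  shows "conn A x z"
  using assms(2,3) concat_curve[OF atl] unfolding conn_def by metis

lemma d_triangle:
  assumes atl: "riemannian_atlas A" and xy: "conn A x y" and yz: "conn A y z"
  shows "riem_dist A x z \<le> riem_dist A x y + riem_dist A y z"
proof -
  have key: "riem_dist A x z - decomp_length \<gamma>2 n2 t2 c2 \<le> riem_dist A x y"
    if a2: "admissible_decomp A \<gamma>2 n2 t2 c2" "\<gamma>2 0 = y" "\<gamma>2 1 = z" for \<gamma>2 n2 t2 c2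
  proof (rule d_ge[OF xy])
    fix \<gamma>1 n1 t1 c1 assume a1: "admissible_decomp A \<gamma>1 n1 t1 c1" "\<gamma>1 0 = x" "\<gamma>1 1 = y"
    obtain \<gamma> n t c where "admissible_decomp A \<gamma> n t c" "\<gamma> 0 = x" "\<gamma> 1 = z"
      "decomp_length \<gamma> n t c = decomp_length \<gamma>1 n1 t1 c1 + decomp_length \<gamma>2 n2 t2 c2"
      using concat_curve[OF atl a1(1) a2(1)] a1 a2 by metis
    then have "riem_dist A x z \<le> decomp_length \<gamma>1 n1 t1 c1 + decomp_length \<gamma>2 n2 t2 c2"
      using d_le[OF atl] by metis
    then show "riem_dist A x z - decomp_length \<gamma>2 n2 t2 c2 \<le> decomp_length \<gamma>1 n1 t1 c1" by simp
  qed
  have "riem_dist A x z - riem_dist A x y \<le> riem_dist A y z"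
  proof (rule d_ge[OF yz])
    fix \<gamma>2 n2 t2 c2 assume "admissible_decomp A \<gamma>2 n2 t2 c2" "\<gamma>2 0 = y" "\<gamma>2 1 = z"
    then show "riem_dist A x z - riem_dist A x y \<le> decomp_length \<gamma>2 n2 t2 c2" using key by fastforce
  qed
  then show ?thesis by simp
qed

lemma local_chart:
  assumes atl: "riemannian_atlas A"
  shows "\<exists>c\<in>A. \<exists>R>0. \<exists>l>0. \<exists>L>0. x \<in> ch_dom c \<and> cball (ch_map c x) R \<subseteq> ch_map c ` ch_dom c \<and>
     (\<forall>y\<in>cball (ch_map c x) R. \<forall>v. l * (norm v)^2 \<le> ch_metric c y v v \<and> ch_metric c y v v \<le> L * (norm v)^2)"
proof -
  have "x \<in> (\<Union>c\<in>A. ch_dom c)" using atl unfolding riemannian_atlas_def by simp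
  then obtain c where c: "c \<in> A" "x \<in> ch_dom c" by blast
  have "ch_map c x \<in> ch_map c ` ch_dom c" using c by blast
  then obtain R where R: "R > 0" "cball (ch_map c x) R \<subseteq> ch_map c ` ch_dom c"
    using atlas_facts(2)[OF atl c(1)] open_contains_cball by blast
  obtain l L where "l > 0" "L > 0" "\<forall>y\<in>cball (ch_map c x) R. \<forall>v. l * (norm v)^2 \<le> ch_metric c y v v \<and> ch_metric c y v v \<le> L * (norm v)^2"
    using metric_bounds[OF atl c(1) compact_cball R(2)] by blast
  then show ?thesis using c R by blast
qed

lemma near_curve:
  assumes atl: "riemannian_atlas A" and c: "c \<in> A"
    and ball: "cball y0 R \<subseteq> ch_map c ` ch_dom c" and L: "L > 0"
    and bnd: "\<forall>y\<in>cball y0 R. \<forall>v. ch_metric c y v v \<le> L * (norm v)^2"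
    and y1: "y1 \<in> cball y0 R" and y2: "y2 \<in> cball y0 R"
  shows "conn A (ch_inv c y1) (ch_inv c y2) \<and> riem_dist A (ch_inv c y1) (ch_inv c y2) \<le> sqrt L * norm (y2 - y1)"
proof -
  have seg: "closed_segment y1 y2 \<subseteq> cball y0 R"
    using y1 y2 convex_cball closed_segment_subset by blast
  obtain \<gamma> n t cc where "admissible_decomp A \<gamma> n t cc" "\<gamma> 0 = ch_inv c y1" "\<gamma> 1 = ch_inv c y2"
      "decomp_length \<gamma> n t cc \<le> sqrt L * norm (y2 - y1)"
    using segment_curve[OF atl c subset_trans[OF seg ball] less_imp_le[OF L]] seg bnd by blast
  then show ?thesis unfolding conn_def using d_le[OF atl] by fastforce
qed

lemma d_self:
  assumes atl: "riemannian_atlas A"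
  shows "conn A x x" "riem_dist A x x = 0"
proof -
  obtain c R l L where c: "c \<in> A" "R > 0" "L > 0" "x \<in> ch_dom c" "cball (ch_map c x) R \<subseteq> ch_map c ` ch_dom c"
     "\<forall>y\<in>cball (ch_map c x) R. \<forall>v. ch_metric c y v v \<le> L * (norm v)^2"
    using local_chart[OF atl, of x] by blast
  have hom: "homeomorphism (ch_dom c) (ch_map c ` ch_dom c) (ch_map c) (ch_inv c)"
    by (rule atlas_facts(3)[OF atl c(1)])
  have inv: "ch_inv c (ch_map c x) = x" using homeomorphism_apply1[OF hom c(4)] .
  have "ch_map c x \<in> cball (ch_map c x) R" using c(2) by simp
  from near_curve[OF atl c(1) c(5) c(3) c(6) this this]
  show "conn A x x" "riem_dist A x x = 0" using inv d_nonneg[OF atl] by (auto intro: antisym)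
qed


lemma chart_open_preimage:
  assumes atl: "riemannian_atlas A" and c: "c \<in> A" and B: "open B"
  shows "open (ch_dom c \<inter> ch_map c -` B)"
proof -
  have hom: "homeomorphism (ch_dom c) (ch_map c ` ch_dom c) (ch_map c) (ch_inv c)"
    by (rule atlas_facts(3)[OF atl c])
  have "open (ch_map c -` B \<inter> ch_dom c)"
    using continuous_on_open_vimage[OF atlas_facts(1)[OF atl c]] homeomorphism_cont1[OF hom] B by blast
  then show ?thesis by (simp add: Int_commute)
qed

lemma nbhd:
  assumes atl: "riemannian_atlas A"
  shows "\<exists>N. open N \<and> x \<in> N \<and> (\<exists>C. \<forall>w\<in>N. conn A x w \<and> conn A w x \<and> riem_dist A x w \<le> C)"
proof -
  obtain c R l L where c: "c \<in> A" "R > 0" "L > 0" "x \<in> ch_dom c" "cball (ch_map c x) R \<subseteq> ch_map c ` ch_dom c"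
     "\<forall>y\<in>cball (ch_map c x) R. \<forall>v. ch_metric c y v v \<le> L * (norm v)^2"
    using local_chart[OF atl, of x] by blast
  have hom: "homeomorphism (ch_dom c) (ch_map c ` ch_dom c) (ch_map c) (ch_inv c)"
    by (rule atlas_facts(3)[OF atl c(1)])
  define N where "N = ch_dom c \<inter> ch_map c -` ball (ch_map c x) R"
  have "open N" unfolding N_def by (rule chart_open_preimage[OF atl c(1) open_ball])
  moreover have "x \<in> N" unfolding N_def using c by simp
  moreover have "\<forall>w\<in>N. conn A x w \<and> conn A w x \<and> riem_dist A x w \<le> sqrt L * R"
  proof
    fix w assume w: "w \<in> N"
    have wd: "w \<in> ch_dom c" and wb: "ch_map c w \<in> cball (ch_map c x) R" "dist (ch_map c x) (ch_map c w) < R"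
      using w unfolding N_def by auto
    have xb: "ch_map c x \<in> cball (ch_map c x) R" using c(2) by simp
    have iw: "ch_inv c (ch_map c w) = w" using homeomorphism_apply1[OF hom wd] .
    have ix: "ch_inv c (ch_map c x) = x" using homeomorphism_apply1[OF hom c(4)] .
    have 1: "conn A x w \<and> riem_dist A x w \<le> sqrt L * norm (ch_map c w - ch_map c x)"
      using near_curve[OF atl c(1) c(5) c(3) c(6) xb wb(1)] iw ix by simp
    have 2: "conn A w x"
      using near_curve[OF atl c(1) c(5) c(3) c(6) wb(1) xb] iw ix by simp
    have "norm (ch_map c w - ch_map c x) \<le> R" using wb(2) by (simp add: dist_norm norm_minus_commute)
    then have "sqrt L * norm (ch_map c w - ch_map c x) \<le> sqrt L * R" by (rule mult_left_mono) (use c(3) in simp)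
    then show "conn A x w \<and> conn A w x \<and> riem_dist A x w \<le> sqrt L * R" using 1 2 by linarith
  qed
  ultimately show ?thesis by blast
qed

lemma conn_all:
  assumes M: "closed_connected_riemannian_manifold A"
  shows "conn A z x"
proof -
  have atl: "riemannian_atlas A" and con: "connected (UNIV :: 'a set)"
    using M unfolding closed_connected_riemannian_manifold_def by auto
  define R where "R = {x. conn A z x}"
  have oR: "open R" unfolding open_subopen[of R]
  proof
    fix x assume x: "x \<in> R"
    obtain N where N: "open N" "x \<in> N" "\<forall>w\<in>N. conn A x w" using nbhd[OF atl, of x] by blast
    have "N \<subseteq> R" using N(3) x conn_trans[OF atl] unfolding R_def by blast
    then show "\<exists>T. open T \<and> x \<in> T \<and> T \<subseteq> R" using N by blast
  qed
  have oC: "open (- R)" unfolding open_subopen[of "- R"]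
  proof
    fix x assume x: "x \<in> - R"
    obtain N where N: "open N" "x \<in> N" "\<forall>w\<in>N. conn A w x" using nbhd[OF atl, of x] by blast
    have "N \<subseteq> - R" using N(3) x conn_trans[OF atl] unfolding R_def by blast
    then show "\<exists>T. open T \<and> x \<in> T \<and> T \<subseteq> - R" using N by blast
  qed
  have "R \<inter> UNIV = {} \<or> - R \<inter> UNIV = {}"
    by (rule connectedD[OF con oR oC]) auto
  moreover have "z \<in> R" unfolding R_def using d_self(1)[OF atl] by blast
  ultimately have "- R = {}" by blast
  then show ?thesis unfolding R_def by blast
qed

lemma d_bounded:
  assumes M: "closed_connected_riemannian_manifold A"
  shows "\<exists>B. \<forall>x. riem_dist A z x \<le> B"
proof -
  have atl: "riemannian_atlas A" and cpt: "compact (UNIV :: 'a set)"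
    using M unfolding closed_connected_riemannian_manifold_def by auto
  define \<T> where "\<T> = {N. open N \<and> (\<exists>C. \<forall>w\<in>N. riem_dist A z w \<le> C)}"
  have cover: "(UNIV :: 'a set) \<subseteq> \<Union>\<T>"
  proof
    fix x :: 'a
    obtain N C where N: "open N" "x \<in> N" "\<forall>w\<in>N. conn A x w \<and> riem_dist A x w \<le> C"
      using nbhd[OF atl, of x] by blast
    have "\<forall>w\<in>N. riem_dist A z w \<le> riem_dist A z x + C"
    proof
      fix w assume "w \<in> N"
      then have "conn A x w" "riem_dist A x w \<le> C" using N(3) by auto
      moreover have "riem_dist A z w \<le> riem_dist A z x + riem_dist A x w"
        using d_triangle[OF atl conn_all[OF M] \<open>conn A x w\<close>] .
      ultimately show "riem_dist A z w \<le> riem_dist A z x + C" by simp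
    qed
    then have "N \<in> \<T>" unfolding \<T>_def using N(1) by blast
    then show "x \<in> \<Union>\<T>" using N(2) by blast
  qed
  obtain \<T>' where T': "\<T>' \<subseteq> \<T>" "finite \<T>'" "(UNIV :: 'a set) \<subseteq> \<Union>\<T>'"
    using compactE[OF cpt cover] unfolding \<T>_def by blast
  have "\<exists>C. \<forall>w\<in>\<Union>\<T>'. riem_dist A z w \<le> C"
    using T'(2,1)
  proof (induction \<T>' rule: finite_induct)
    case empty then show ?case by simp
  next
    case (insert N F)
    obtain C1 where C1: "\<forall>w\<in>\<Union>F. riem_dist A z w \<le> C1" using insert by blast
    obtain C2 where C2: "\<forall>w\<in>N. riem_dist A z w \<le> C2" using insert(4) unfolding \<T>_def by blast
    have "\<forall>w\<in>\<Union>(insert N F). riem_dist A z w \<le> max C1 C2"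
      using C1 C2 by (auto intro: le_max_iff_disj[THEN iffD2])
    then show ?case by blast
  qed
  then show ?thesis using T'(3) by blast
qed


lemma vd_chain:
  assumes y: "(y has_vector_derivative v) (at s within S)" and T: "(T has_derivative T') (at (y s))"
  shows "((\<lambda>s. T (y s)) has_vector_derivative T' v) (at s within S)"
proof -
  have bl: "bounded_linear T'" using has_derivative_bounded_linear[OF T] .
  have eq: "(\<lambda>x. T' (x *\<^sub>R v)) = (\<lambda>x. x *\<^sub>R T' v)"
    using linear_cmul[OF bounded_linear.linear[OF bl]] by auto
  have "((\<lambda>s. T (y s)) has_derivative (\<lambda>x. T' (x *\<^sub>R v))) (at s within S)"
    using has_derivative_compose[OF y[unfolded has_vector_derivative_def] T] .
  then show ?thesis unfolding has_vector_derivative_def eq .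
qed

lemma integral_sub_le:
  fixes f :: "real \<Rightarrow> real"
  assumes "f integrable_on {a..b}" "\<And>s. s \<in> {a..b} \<Longrightarrow> 0 \<le> f s" "a \<le> b'" "b' \<le> b"
  shows "integral {a..b'} f \<le> integral {a..b} f"
proof -
  have "integral {a..b'} f + integral {b'..b} f = integral {a..b} f"
    by (rule Henstock_Kurzweil_Integration.integral_combine[OF assms(3,4,1)])
  moreover have "0 \<le> integral {b'..b} f"
    by (rule integral_nonneg[OF integrable_subinterval_real[OF assms(1)]]) (use assms in auto)
  ultimately show ?thesis by linarith
qed

lemma piece_lower:
  assumes atl: "riemannian_atlas A" and c: "c \<in> A"
    and pok: "piece_ok A \<gamma> a b cs D"
    and ab': "a < b'" "b' \<le> b"
    and inK: "\<And>s. s \<in> {a..b'} \<Longrightarrow> \<gamma> s \<in> ch_dom c \<and> ch_map c (\<gamma> s) \<in> K"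
    and lam: "\<And>y v. y \<in> K \<Longrightarrow> l * (norm v)^2 \<le> ch_metric c y v v" and l: "l > 0"
  shows "sqrt l * norm (ch_map c (\<gamma> b') - ch_map c (\<gamma> a)) \<le> integral {a..b} (seg_int cs \<gamma> a b)"
proof -
  have cs: "cs \<in> A" and domcs: "\<gamma> ` {a..b} \<subseteq> ch_dom cs"
    and der: "\<And>s. s \<in> {a..b} \<Longrightarrow> ((ch_map cs \<circ> \<gamma>) has_vector_derivative D s) (at s within {a..b})"
    using pok unfolding piece_ok_def by auto
  have homs: "homeomorphism (ch_dom cs) (ch_map cs ` ch_dom cs) (ch_map cs) (ch_inv cs)"
    by (rule atlas_facts(3)[OF atl cs])
  obtain T' where T'1: "\<And>y. y \<in> ch_map cs ` (ch_dom cs \<inter> ch_dom c) \<Longrightarrow>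
        ((ch_map c \<circ> ch_inv cs) has_derivative T' y) (at y)"
    and T'2: "\<And>y v w. y \<in> ch_map cs ` (ch_dom cs \<inter> ch_dom c) \<Longrightarrow>
        ch_metric cs y v w = ch_metric c (ch_map c (ch_inv cs y)) (T' y v) (T' y w)"
    using atlas_trans[OF atl cs c] by blast
  define h where "h s = ch_map c (\<gamma> s)" for s
  define h' where "h' s = T' (ch_map cs (\<gamma> s)) (D s)" for s
  have sub: "{a..b'} \<subseteq> {a..b}" using ab' by auto
  have ys: "ch_map cs (\<gamma> s) \<in> ch_map cs ` (ch_dom cs \<inter> ch_dom c)" if "s \<in> {a..b'}" for s
    using inK[OF that] domcs sub that by blast
  have invs: "ch_inv cs (ch_map cs (\<gamma> s)) = \<gamma> s" if "s \<in> {a..b}" for s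
    using homeomorphism_apply1[OF homs] domcs that by blast
  have hder: "(h has_vector_derivative h' s) (at s within {a..b'})" if s: "s \<in> {a..b'}" for s
  proof -
    have d1: "((\<lambda>s. ch_map cs (\<gamma> s)) has_vector_derivative D s) (at s within {a..b'})"
      using has_vector_derivative_within_subset[OF der[OF subsetD[OF sub s]] sub] by (simp add: o_def)
    have "((\<lambda>s. (ch_map c \<circ> ch_inv cs) (ch_map cs (\<gamma> s))) has_vector_derivative h' s) (at s within {a..b'})"
      unfolding h'_def by (rule vd_chain[OF d1 T'1[OF ys[OF s]]])
    then show ?thesis
      by (rule has_vector_derivative_transform[OF s, rotated]) (use invs sub in \<open>auto simp: h_def\<close>)
  qed
  have ftc: "(h' has_integral (h b' - h a)) {a..b'}"
    using fundamental_theorem_of_calculus[OF less_imp_le[OF ab'(1)] hder] .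
  have pt: "sqrt l * norm (h' s) \<le> seg_int cs \<gamma> a b s" if s: "s \<in> {a..b'}" for s
  proof -
    have "ch_metric cs (ch_map cs (\<gamma> s)) (D s) (D s) = ch_metric c (h s) (h' s) (h' s)"
      unfolding h_def h'_def using T'2[OF ys[OF s]] invs sub s by auto
    moreover have "l * (norm (h' s))^2 \<le> ch_metric c (h s) (h' s) (h' s)"
      using lam inK[OF s] unfolding h_def by blast
    ultimately have "sqrt (l * (norm (h' s))^2) \<le> sqrt (ch_metric cs (ch_map cs (\<gamma> s)) (D s) (D s))"
      by simp
    then show ?thesis using piece_seg_int[OF pok subsetD[OF sub s]] by (simp add: real_sqrt_mult)
  qed
  have int_s: "seg_int cs \<gamma> a b integrable_on {a..b}" by (rule piece_integrable[OF atl pok])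
  have "norm (integral {a..b'} (\<lambda>s. sqrt l *\<^sub>R h' s)) \<le> integral {a..b'} (seg_int cs \<gamma> a b)"
  proof (rule integral_norm_bound_integral)
    show "(\<lambda>s. sqrt l *\<^sub>R h' s) integrable_on {a..b'}"
      using has_integral_cmul[OF ftc] by blast
    show "seg_int cs \<gamma> a b integrable_on {a..b'}"
      by (rule integrable_subinterval_real[OF int_s sub])
    fix s assume "s \<in> {a..b'}"
    moreover have "\<bar>sqrt l\<bar> = sqrt l" using l by simp
    ultimately show "norm (sqrt l *\<^sub>R h' s) \<le> seg_int cs \<gamma> a b s" using pt by simp
  qed
  moreover have "integral {a..b'} (\<lambda>s. sqrt l *\<^sub>R h' s) = sqrt l *\<^sub>R (h b' - h a)"
    using has_integral_cmul[OF ftc] by (rule integral_unique)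
  moreover have "integral {a..b'} (seg_int cs \<gamma> a b) \<le> integral {a..b} (seg_int cs \<gamma> a b)"
    by (rule integral_sub_le[OF int_s piece_nonneg[OF atl pok] less_imp_le[OF ab'(1)] ab'(2)])
  ultimately show ?thesis unfolding h_def using l by simp
qed


lemma lower_bound:
  assumes atl: "riemannian_atlas A" and c: "c \<in> A"
    and cb: "cball y0 \<rho> \<subseteq> ch_map c ` ch_dom c" and rho: "\<rho> > 0" and l: "l > 0"
    and lam: "\<And>y v. y \<in> cball y0 \<rho> \<Longrightarrow> l * (norm v)^2 \<le> ch_metric c y v v"
    and adm: "admissible_decomp A \<gamma> n t cs" and g0: "\<gamma> 0 = ch_inv c y0"
    and g1: "\<gamma> 1 \<notin> ch_dom c \<inter> ch_map c -` ball y0 \<rho>"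
  shows "sqrt l * \<rho> \<le> decomp_length \<gamma> n t cs"
proof -
  have hom: "homeomorphism (ch_dom c) (ch_map c ` ch_dom c) (ch_map c) (ch_inv c)"
    by (rule atlas_facts(3)[OF atl c])
  have gc: "continuous_on {0..1} \<gamma>" and t0: "t 0 = 0" and tn: "t n = 1"
    using adm unfolding admissible_decomp_def by auto
  define Ob where "Ob = ch_dom c \<inter> ch_map c -` ball y0 \<rho>"
  have oO: "open Ob" unfolding Ob_def by (rule chart_open_preimage[OF atl c open_ball])
  define K' where "K' = ch_inv c ` cball y0 \<rho>"
  have cK': "compact K'" unfolding K'_def
    by (rule compact_continuous_image[OF continuous_on_subset[OF homeomorphism_cont2[OF hom] cb] compact_cball])
  have clK': "closed K'" by (rule compact_imp_closed[OF cK'])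
  have K'prop: "w \<in> ch_dom c \<and> ch_map c w \<in> cball y0 \<rho>" if wK: "w \<in> K'" for w
  proof -
    obtain y where y: "y \<in> cball y0 \<rho>" "w = ch_inv c y" using wK unfolding K'_def by blast
    have "y \<in> ch_map c ` ch_dom c" using y cb by blast
    then have "ch_map c (ch_inv c y) = y" "ch_inv c y \<in> ch_dom c"
      using homeomorphism_apply2[OF hom] homeomorphism_image2[OF hom] by auto
    then show ?thesis using y by simp
  qed
  have y0in: "y0 \<in> ch_map c ` ch_dom c" using cb rho by auto
  have g0O: "\<gamma> 0 \<in> Ob" unfolding Ob_def g0
    using homeomorphism_apply2[OF hom y0in] homeomorphism_image2[OF hom] y0in rho by auto
  define E where "E = {0..1} \<inter> \<gamma> -` (- Ob)"
  have clE: "closed E" unfolding E_def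
    by (rule continuous_closed_preimage[OF gc closed_atLeastAtMost]) (use oO in auto)
  have E1: "1 \<in> E" unfolding E_def using g1 unfolding Ob_def by auto
  have bE: "bdd_below E" unfolding E_def by (rule bdd_belowI[of _ 0]) auto
  define \<tau> where "\<tau> = Inf E"
  have \<tau>E: "\<tau> \<in> E" unfolding \<tau>_def by (rule closed_contains_Inf[OF _ bE clE]) (use E1 in auto)
  have \<tau>1: "\<tau> \<le> 1" unfolding \<tau>_def by (rule cInf_lower[OF E1 bE])
  have \<tau>0: "0 < \<tau>"
  proof -
    have "0 \<le> \<tau>" using \<tau>E unfolding E_def by auto
    moreover have "\<tau> \<noteq> 0" using \<tau>E g0O unfolding E_def by auto
    ultimately show ?thesis by simp
  qed
  have \<tau>notO: "\<gamma> \<tau> \<notin> Ob" using \<tau>E unfolding E_def by auto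
  have below: "\<gamma> s \<in> Ob" if "s \<in> {0..<\<tau>}" for s
  proof (rule ccontr)
    assume "\<gamma> s \<notin> Ob"
    then have "s \<in> E" using that \<tau>1 unfolding E_def by auto
    then have "\<tau> \<le> s" unfolding \<tau>_def by (rule cInf_lower[OF _ bE])
    then show False using that by simp
  qed
  have ObK': "w \<in> K'" if "w \<in> Ob" for w
  proof -
    have "w \<in> ch_dom c" "ch_map c w \<in> ball y0 \<rho>" using that unfolding Ob_def by auto
    then have "ch_inv c (ch_map c w) = w" "ch_map c w \<in> cball y0 \<rho>"
      using homeomorphism_apply1[OF hom] by auto
    then show ?thesis unfolding K'_def by (metis image_eqI)
  qed
  define F where "F = {0..\<tau>} \<inter> \<gamma> -` K'"
  have clF: "closed F" unfolding F_def
    by (rule continuous_closed_preimage[OF continuous_on_subset[OF gc] closed_atLeastAtMost clK']) (use \<tau>1 in auto)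
  have "{0..<\<tau>} \<subseteq> F" unfolding F_def using below ObK' by auto
  then have "closure {0..<\<tau>} \<subseteq> F" using clF closure_minimal by blast
  then have "{0..\<tau>} \<subseteq> F" using \<tau>0 by simp
  then have inK: "\<gamma> s \<in> ch_dom c \<and> ch_map c (\<gamma> s) \<in> cball y0 \<rho>" if "s \<in> {0..\<tau>}" for s
    using K'prop that unfolding F_def by blast
  have end_norm: "norm (ch_map c (\<gamma> \<tau>) - y0) = \<rho>"
  proof -
    have "ch_map c (\<gamma> \<tau>) \<in> cball y0 \<rho>" "\<gamma> \<tau> \<in> ch_dom c" using inK[of \<tau>] \<tau>0 by auto
    moreover have "ch_map c (\<gamma> \<tau>) \<notin> ball y0 \<rho>" using \<tau>notO calculation(2) unfolding Ob_def by auto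
    ultimately show ?thesis by (simp add: dist_norm norm_minus_commute)
  qed
  define Fn where "Fn s = ch_map c (\<gamma> (min s \<tau>))" for s
  have piece: "sqrt l * norm (Fn (t (Suc i)) - Fn (t i)) \<le> integral {t i..t (Suc i)} (seg_int (cs i) \<gamma> (t i) (t (Suc i)))"
    if i: "i < n" for i
  proof -
    obtain D where pok: "piece_ok A \<gamma> (t i) (t (Suc i)) (cs i) D" using adm_piece[OF adm i] by blast
    have tlt: "t i < t (Suc i)" using pok unfolding piece_ok_def by simp
    have ti0: "0 \<le> t i" using adm_range[OF adm, of i] i by simp
    show ?thesis
    proof (cases "\<tau> \<le> t i")
      case True
      then have "Fn (t (Suc i)) = Fn (t i)" unfolding Fn_def using tlt by (simp add: min_def)
      then show ?thesis using piece_int_nonneg[OF atl pok] by simp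
    next
      case False
      define b' where "b' = min (t (Suc i)) \<tau>"
      have ab': "t i < b'" "b' \<le> t (Suc i)" unfolding b'_def using False tlt by auto
      have inK2: "\<gamma> s \<in> ch_dom c \<and> ch_map c (\<gamma> s) \<in> cball y0 \<rho>" if "s \<in> {t i..b'}" for s
        using inK[of s] that ti0 unfolding b'_def by auto
      have "sqrt l * norm (ch_map c (\<gamma> b') - ch_map c (\<gamma> (t i))) \<le> integral {t i..t (Suc i)} (seg_int (cs i) \<gamma> (t i) (t (Suc i)))"
        by (rule piece_lower[OF atl c pok ab' inK2 lam l]) auto
      moreover have "Fn (t (Suc i)) = ch_map c (\<gamma> b')" "Fn (t i) = ch_map c (\<gamma> (t i))"
        unfolding Fn_def b'_def using False by auto
      ultimately show ?thesis by simp
    qed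
  qed
  have "(\<Sum>i<n. Fn (t (Suc i)) - Fn (t i)) = Fn (t n) - Fn (t 0)"
    by (rule sum_lessThan_telescope)
  also have "\<dots> = ch_map c (\<gamma> \<tau>) - y0"
    unfolding Fn_def tn t0 using \<tau>1 \<tau>0 g0 homeomorphism_apply2[OF hom y0in] by (simp add: min_def)
  finally have tel: "norm (\<Sum>i<n. Fn (t (Suc i)) - Fn (t i)) = \<rho>" using end_norm by simp
  have "sqrt l * \<rho> \<le> sqrt l * (\<Sum>i<n. norm (Fn (t (Suc i)) - Fn (t i)))"
    unfolding tel[symmetric] by (rule mult_left_mono[OF norm_sum]) (use l in simp)
  also have "\<dots> = (\<Sum>i<n. sqrt l * norm (Fn (t (Suc i)) - Fn (t i)))" by (simp add: sum_distrib_left)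
  also have "\<dots> \<le> (\<Sum>i<n. integral {t i..t (Suc i)} (seg_int (cs i) \<gamma> (t i) (t (Suc i))))"
    by (rule sum_mono) (use piece in auto)
  also have "\<dots> = decomp_length \<gamma> n t cs" by (simp add: decomp_length_eq)
  finally show ?thesis .
qed


lemma bounded_range_iff: "bounded (range f) \<longleftrightarrow> (\<exists>B. \<forall>x. \<bar>f x :: real\<bar> \<le> B)"
  unfolding bounded_iff by auto

lemma sup_dist_ge:
  assumes "bounded (range f)" "bounded (range g)"
  shows "\<bar>f x - g x\<bar> \<le> sup_dist f g"
proof -
  obtain B1 where B1: "\<forall>x. \<bar>f x\<bar> \<le> B1" using assms(1) bounded_range_iff by blast
  obtain B2 where B2: "\<forall>x. \<bar>g x\<bar> \<le> B2" using assms(2) bounded_range_iff by blast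
  have "bdd_above (range (\<lambda>x. \<bar>f x - g x\<bar>))"
  proof (rule bdd_aboveI2)
    fix x show "\<bar>f x - g x\<bar> \<le> B1 + B2" using B1[rule_format, of x] B2[rule_format, of x] abs_triangle_ineq4[of "f x" "g x"] by linarith
  qed
  then show ?thesis unfolding sup_dist_def by (rule cSUP_upper[OF UNIV_I])
qed

lemma sup_dist_le:
  assumes "\<And>x. \<bar>f x - g x\<bar> \<le> C"
  shows "sup_dist f g \<le> C"
  unfolding sup_dist_def by (rule cSUP_least) (use assms in auto)

lemma max_lemma:
  fixes a b \<rho> :: real
  assumes "\<bar>a - b\<bar> \<le> 2 * \<rho>" "0 \<le> a" "0 \<le> b"
  shows "\<bar>max \<rho> (max a b - \<rho>) - a\<bar> \<le> \<rho>"
  using assms by (cases "a \<le> b"; cases "\<rho> \<le> max a b - \<rho>") (simp_all add: max_def abs_le_iff)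
lemma abs_bd: fixes u v B \<rho> :: real assumes "\<bar>u - v\<bar> \<le> \<rho>" "\<bar>v\<bar> \<le> B" shows "\<bar>u\<bar> \<le> B + \<rho>"
  using assms by linarith
lemma tri_abs: fixes u v w e :: real assumes "u \<le> e + v" "v \<le> e + u" shows "\<bar>u - v\<bar> \<le> e"
  using assms by linarith

theorem theorem1p6:
  fixes A :: "('a::t2_space, 'b::euclidean_space) rchart set"
    and p :: 'a
  assumes "closed_connected_riemannian_manifold A"
  shows "reach Linf sup_dist (kuratowski A p) (range (kuratowski A)) = 0"
proof -
  note M = assms
  have atl: "riemannian_atlas A" using M unfolding closed_connected_riemannian_manifold_def by auto
  define d where "d = riem_dist A"
  define k where "k = kuratowski A"
  have kd: "k z x = d z x" for z x unfolding k_def d_def kuratowski_def by simp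
  have dnn: "0 \<le> d z x" for z x unfolding d_def by (rule d_nonneg[OF atl conn_all[OF M]])
  have dzz: "d z z = 0" for z unfolding d_def by (rule d_self(2)[OF atl])
  have tri: "d x z \<le> d x y + d y z" for x y z
    unfolding d_def by (rule d_triangle[OF atl conn_all[OF M] conn_all[OF M]])
  have kbd: "bounded (range (k z))" for z
  proof -
    obtain B where "\<forall>x. riem_dist A z x \<le> B" using d_bounded[OF M] by blast
    then have "\<forall>x. \<bar>k z x\<bar> \<le> B" using dnn unfolding kd d_def by (simp add: abs_of_nonneg)
    then show ?thesis using bounded_range_iff by blast
  qed
  have kLinf: "k z \<in> Linf" for z unfolding Linf_def using kbd by simp
  obtain c R l L where c: "c \<in> A" "R > 0" "l > 0" "L > 0" "p \<in> ch_dom c"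
    "cball (ch_map c p) R \<subseteq> ch_map c ` ch_dom c"
    "\<forall>y\<in>cball (ch_map c p) R. \<forall>v. l * (norm v)^2 \<le> ch_metric c y v v \<and> ch_metric c y v v \<le> L * (norm v)^2"
    using local_chart[OF atl, of p] by blast
  have hom: "homeomorphism (ch_dom c) (ch_map c ` ch_dom c) (ch_map c) (ch_inv c)"
    by (rule atlas_facts(3)[OF atl c(1)])
  define y0 where "y0 = ch_map c p"
  have iy0: "ch_inv c y0 = p" unfolding y0_def using homeomorphism_apply1[OF hom c(5)] .
  obtain b :: 'b where b: "b \<in> Basis" using nonempty_Basis by blast
  have nb: "norm b = 1" using b by simp
  have notball: "\<not> open_ball Linf sup_dist (k p) r \<subseteq> Unp Linf sup_dist (range k)" if r: "r > 0" for r
  proof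
    assume sub: "open_ball Linf sup_dist (k p) r \<subseteq> Unp Linf sup_dist (range k)"
    define \<epsilon> where "\<epsilon> = min R (r / sqrt L)"
    have \<epsilon>0: "\<epsilon> > 0" unfolding \<epsilon>_def using c r by simp
    have \<epsilon>R: "\<epsilon> \<le> R" unfolding \<epsilon>_def by simp
    have \<epsilon>r: "sqrt L * \<epsilon> \<le> r" unfolding \<epsilon>_def using c r by (simp add: min_def field_simps)
    define y1 where "y1 = y0 + \<epsilon> *\<^sub>R b"
    define q where "q = ch_inv c y1"
    have ny1: "norm (y1 - y0) = \<epsilon>" "norm (y0 - y1) = \<epsilon>" unfolding y1_def using nb \<epsilon>0 by auto
    have y0c: "y0 \<in> cball y0 R" using c(2) by simp
    have y1c: "y1 \<in> cball y0 R" using ny1 \<epsilon>R by (simp add: dist_norm norm_minus_commute)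
    have bndL: "\<forall>y\<in>cball y0 R. \<forall>v. ch_metric c y v v \<le> L * (norm v)^2" using c(7) unfolding y0_def by blast
    have cbR: "cball y0 R \<subseteq> ch_map c ` ch_dom c" using c(6) unfolding y0_def .
    have dpq: "d p q \<le> sqrt L * \<epsilon>"
      using near_curve[OF atl c(1) cbR c(4) bndL y0c y1c] iy0 ny1 unfolding d_def q_def by simp
    have dqp: "d q p \<le> sqrt L * \<epsilon>"
      using near_curve[OF atl c(1) cbR c(4) bndL y1c y0c] iy0 ny1 unfolding d_def q_def by simp
    have dpq_pos: "sqrt l * \<epsilon> \<le> d p q"
      unfolding d_def
    proof (rule d_ge[OF conn_all[OF M]])
      fix \<gamma> n t cs assume a: "admissible_decomp A \<gamma> n t cs" "\<gamma> 0 = p" "\<gamma> 1 = q"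
      have cbe: "cball y0 \<epsilon> \<subseteq> ch_map c ` ch_dom c" using cbR subset_cball[OF \<epsilon>R] by (rule order_trans[rotated])
      have lam: "\<And>y v. y \<in> cball y0 \<epsilon> \<Longrightarrow> l * (norm v)^2 \<le> ch_metric c y v v"
        using c(7) subsetD[OF subset_cball[OF \<epsilon>R]] unfolding y0_def by blast
      have y1U: "y1 \<in> ch_map c ` ch_dom c" using cbR y1c by blast
      have "ch_map c q = y1" unfolding q_def by (rule homeomorphism_apply2[OF hom y1U])
      then have g1: "\<gamma> 1 \<notin> ch_dom c \<inter> ch_map c -` ball y0 \<epsilon>" using a(3) ny1 by (simp add: dist_norm norm_minus_commute)
      have g0: "\<gamma> 0 = ch_inv c y0" using a(2) iy0 by simp
      show "sqrt l * \<epsilon> \<le> decomp_length \<gamma> n t cs"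
        by (rule lower_bound[OF atl c(1) cbe \<epsilon>0 c(3) lam a(1) g0 g1])
    qed
    have "0 < sqrt l * \<epsilon>" using \<epsilon>0 c(3) by (intro mult_pos_pos) simp_all
    then have dpq_gt: "d p q > 0" using dpq_pos by linarith
    have diff: "\<bar>d p x - d q x\<bar> \<le> sqrt L * \<epsilon>" for x
      proof (rule tri_abs)
      show "d p x \<le> sqrt L * \<epsilon> + d q x" using tri[where x=p and y=q and z=x] dpq by linarith
      show "d q x \<le> sqrt L * \<epsilon> + d p x" using tri[where x=q and y=p and z=x] dqp by linarith
    qed
    define \<delta> where "\<delta> = sup_dist (k p) (k q)"
    have \<delta>le: "\<delta> \<le> sqrt L * \<epsilon>" unfolding \<delta>_def by (rule sup_dist_le) (use diff kd in simp)
    have \<delta>ge: "\<bar>d p x - d q x\<bar> \<le> \<delta>" for x using sup_dist_ge[OF kbd[of p] kbd[of q], of x] unfolding \<delta>_def kd .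
    have \<delta>pos: "\<delta> > 0" using \<delta>ge[of q] dzz[of q] dpq_gt by simp
    define \<rho> where "\<rho> = \<delta> / 2"
    have \<rho>pos: "\<rho> > 0" unfolding \<rho>_def using \<delta>pos by simp
    have \<rho>r: "\<rho> < r" unfolding \<rho>_def using \<delta>le \<epsilon>r r by simp
    define f where "f x = max \<rho> (max (d p x) (d q x) - \<rho>)" for x
    have fp: "\<bar>f x - k p x\<bar> \<le> \<rho>" for x
      unfolding f_def kd by (rule max_lemma) (use \<delta>ge[of x] dnn[of p x] dnn[of q x] \<rho>_def in auto)
    have fq: "\<bar>f x - k q x\<bar> \<le> \<rho>" for x
    proof -
      have "max (d p x) (d q x) = max (d q x) (d p x)" by (simp add: max.commute)
      then show ?thesis
        unfolding f_def kd by (simp only:) (rule max_lemma, use \<delta>ge[of x] dnn[of p x] dnn[of q x] \<rho>_def in \<open>auto simp: abs_minus_commute\<close>)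
    qed
    have fbd: "bounded (range f)"
    proof -
      obtain B where B: "\<forall>x. \<bar>k p x\<bar> \<le> B" using kbd[of p] bounded_range_iff by blast
      have "\<bar>f x\<bar> \<le> B + \<rho>" for x by (rule abs_bd[OF fp[of x] B[rule_format]])
      then show ?thesis using bounded_range_iff by blast
    qed
    have fL: "f \<in> Linf" unfolding Linf_def using fbd by simp
    have pf: "sup_dist (k p) f \<le> \<rho>" by (rule sup_dist_le) (use fp in \<open>simp add: abs_minus_commute\<close>)
    have fp2: "sup_dist f (k p) \<le> \<rho>" by (rule sup_dist_le) (use fp in simp)
    have fq2: "sup_dist f (k q) \<le> \<rho>" by (rule sup_dist_le) (use fq in simp)
    have fz: "\<rho> \<le> sup_dist f (k z)" for z
    proof -
      have "\<bar>f z - k z z\<bar> \<le> sup_dist f (k z)" by (rule sup_dist_ge[OF fbd kbd])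
      moreover have "\<bar>f z - k z z\<bar> = f z" using dzz[of z] \<rho>pos unfolding kd f_def by simp
      moreover have "\<rho> \<le> f z" unfolding f_def by simp
      ultimately show ?thesis by simp
    qed
    have sd: "set_dist sup_dist f (range k) = \<rho>"
    proof -
      have "set_dist sup_dist f (range k) \<le> sup_dist f (k p)"
        unfolding set_dist_def
        by (rule cINF_lower) (auto intro!: bdd_belowI[of _ \<rho>] simp: fz)
      moreover have "\<rho> \<le> set_dist sup_dist f (range k)"
        unfolding set_dist_def by (rule cINF_greatest) (auto simp: fz)
      ultimately show ?thesis using fp2 by simp
    qed
    have eqp: "sup_dist f (k p) = \<rho>" using fp2 fz[of p] by simp
    have eqq: "sup_dist f (k q) = \<rho>" using fq2 fz[of q] by simp
    have kne: "k p \<noteq> k q"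
    proof
      assume "k p = k q"
      then have "k p q = k q q" by simp
      then show False using dpq_gt dzz[of q] unfolding kd by simp
    qed
    have "f \<in> open_ball Linf sup_dist (k p) r" unfolding open_ball_def using fL pf \<rho>r by simp
    then have "f \<in> Unp Linf sup_dist (range k)" using sub by blast
    then have "\<exists>!a. a \<in> range k \<and> set_dist sup_dist f (range k) = sup_dist f a" unfolding Unp_def by blast
    moreover have "k p \<in> range k \<and> set_dist sup_dist f (range k) = sup_dist f (k p)" using sd eqp by simp
    moreover have "k q \<in> range k \<and> set_dist sup_dist f (range k) = sup_dist f (k q)" using sd eqq by simp
    ultimately show False using kne by blast
  qed
  have zero_in: "open_ball Linf sup_dist (k p) 0 \<subseteq> Unp Linf sup_dist (range k)"
  proof -
    have "open_ball Linf sup_dist (k p) 0 = {}"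
    proof (rule equals0I)
      fix g assume "g \<in> open_ball Linf sup_dist (k p) 0"
      then have g: "g \<in> Linf" "sup_dist (k p) g < 0" unfolding open_ball_def by auto
      have "\<bar>k p p - g p\<bar> \<le> sup_dist (k p) g" using g(1) unfolding Linf_def by (intro sup_dist_ge[OF kbd]) simp
      then show False using g(2) by simp
    qed
    then show ?thesis by simp
  qed
  have "{ereal r | r. r \<ge> 0 \<and> open_ball Linf sup_dist (k p) r \<subseteq> Unp Linf sup_dist (range k)} = {ereal 0}"
  proof
    show "{ereal r | r. r \<ge> 0 \<and> open_ball Linf sup_dist (k p) r \<subseteq> Unp Linf sup_dist (range k)} \<subseteq> {ereal 0}"
    proof
      fix e assume "e \<in> {ereal r | r. r \<ge> 0 \<and> open_ball Linf sup_dist (k p) r \<subseteq> Unp Linf sup_dist (range k)}"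
      then obtain r where r: "e = ereal r" "r \<ge> 0" "open_ball Linf sup_dist (k p) r \<subseteq> Unp Linf sup_dist (range k)" by blast
      have "r = 0" using notball[of r] r(2,3) by (cases "r > 0") auto
      then show "e \<in> {ereal 0}" using r(1) by simp
    qed
    show "{ereal 0} \<subseteq> {ereal r | r. r \<ge> 0 \<and> open_ball Linf sup_dist (k p) r \<subseteq> Unp Linf sup_dist (range k)}"
      using zero_in by auto
  qed
  then show ?thesis unfolding reach_def k_def by (simp add: zero_ereal_def)
qed

end
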